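(* Let $K_1\subset\mathbb C$ and $K_2\subset\mathbb C^m$ be compact sets. Under the identification of $C(K_1\times K_2)$ with $C(K_1,C(K_2))$ given by $F\mapsto (x\mapsto F(x,\cdot))$, we have \[ \overline{\mathcal O}\big(K_1,\overline{\mathcal O}(K_2)\big)\subset\overline{\mathcal O}(K_1\times K_2). \]
   Context: For a compact $K\subset\mathbb C^n$, $\overline{\mathcal O}(K)$ is the closure in $C(K)$ (supremum norm) of restrictions to $K$ of functions holomorphic on some open neighbourhood of $K$. For a planar compact $K_1$ and a Banach space $W$, $C(K_1,W)$ is the Banach space of continuous maps $K_1\to W$ with the supremum norm, and $\overline{\mathcal O}(K_1,W)$ is the closure in $C(K_1,W)$ of the set of (restrictions of) $W$-valued functions holomorphic on some open neighbourhood of $K_1$ in $\mathbb C$. Here $W=\overline{\mathcal O}(K_2)\subset C(K_2)$, so $C(K_1,W)$ is viewed as a subspace of $C(K_1\times K_2)$. *)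

theory Defs
  imports "HOL-Analysis.Analysis"
begin

definition holo_vec :: "(complex^'n \<Rightarrow> complex) \<Rightarrow> (complex^'n) set \<Rightarrow> bool" where
  "holo_vec f U \<longleftrightarrow> open U \<and>
     (\<forall>z\<in>U. \<exists>L. (f has_derivative L) (at z) \<and> (\<forall>c v. L (c *s v) = c * L v))"

definition Obar :: "(complex^'n) set \<Rightarrow> (complex^'n \<Rightarrow> complex) set" where
  "Obar K = {g. continuous_on K g \<and>
     (\<forall>\<epsilon>>0. \<exists>U f. K \<subseteq> U \<and> holo_vec f U \<and> (\<forall>x\<in>K. cmod (g x - f x) \<le> \<epsilon>))}"

text \<open>W-valued holomorphic functions, W = Obar K2 with the sup norm over K2:
  H z \<in> W for z \<in> U, and at each z the difference quotients converge
  uniformly on K2 (i.e. in the norm of W) to some element D of W.\<close>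

definition holoW :: "(complex^'m) set \<Rightarrow> (complex \<Rightarrow> complex^'m \<Rightarrow> complex) \<Rightarrow> complex set \<Rightarrow> bool" where
  "holoW K2 H U \<longleftrightarrow> open U \<and> (\<forall>z\<in>U. H z \<in> Obar K2) \<and>
     (\<forall>z\<in>U. \<exists>D \<in> Obar K2. uniform_limit K2 (\<lambda>t w. (H (z + t) w - H z w) / t) D (at 0))"

text \<open>\<open>ObarW K1 K2\<close> = Obar(K1, Obar(K2)) \<subseteq> C(K1, Obar(K2)).\<close>

definition ObarW :: "complex set \<Rightarrow> (complex^'m) set \<Rightarrow> (complex \<Rightarrow> complex^'m \<Rightarrow> complex) set" where
  "ObarW K1 K2 = {\<Phi>. (\<forall>x\<in>K1. \<Phi> x \<in> Obar K2) \<and>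
     (\<forall>x\<in>K1. uniform_limit K2 (\<lambda>y. \<Phi> y) (\<Phi> x) (at x within K1)) \<and>
     (\<forall>\<epsilon>>0. \<exists>U H. K1 \<subseteq> U \<and> holoW K2 H U \<and>
         (\<forall>x\<in>K1. \<forall>w\<in>K2. cmod (\<Phi> x w - H x w) \<le> \<epsilon>))}"

text \<open>C x C^m = C^{1+m}, coordinates indexed by unit + 'm.\<close>

definition pair_vec :: "complex \<Rightarrow> complex^'m \<Rightarrow> complex^(unit + 'm)" where
  "pair_vec z w = (\<chi> i. case i of Inl _ \<Rightarrow> z | Inr j \<Rightarrow> w $ j)"

end

theory Submission
  imports Defs "HOL-Complex_Analysis.Complex_Analysis"
begin

lemma holo_vec_subset: "holo_vec f U \<Longrightarrow> open V \<Longrightarrow> V \<subseteq> U \<Longrightarrow> holo_vec f V"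
  unfolding holo_vec_def by blast

lemma holo_vec_const: "open U \<Longrightarrow> holo_vec (\<lambda>v. c) U"
  unfolding holo_vec_def by (auto intro!: exI[of _ "\<lambda>_. 0"] derivative_eq_intros)

lemma holo_vec_add:
  assumes "holo_vec f U" "holo_vec g U" shows "holo_vec (\<lambda>v. f v + g v) U"
  unfolding holo_vec_def
proof (intro conjI ballI)
  show "open U" using assms unfolding holo_vec_def by blast
  fix z assume z: "z \<in> U"
  obtain L1 where L1: "(f has_derivative L1) (at z)" "\<forall>c v. L1 (c *s v) = c * L1 v"
    using assms(1) z unfolding holo_vec_def by blast
  obtain L2 where L2: "(g has_derivative L2) (at z)" "\<forall>c v. L2 (c *s v) = c * L2 v"
    using assms(2) z unfolding holo_vec_def by blast
  show "\<exists>L. ((\<lambda>v. f v + g v) has_derivative L) (at z) \<and> (\<forall>c v. L (c *s v) = c * L v)"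
    by (rule exI[of _ "\<lambda>v. L1 v + L2 v"]) (use L1 L2 in \<open>auto intro: has_derivative_add simp: algebra_simps\<close>)
qed

lemma holo_vec_mult:
  assumes "holo_vec f U" "holo_vec g U" shows "holo_vec (\<lambda>v. f v * g v) U"
  unfolding holo_vec_def
proof (intro conjI ballI)
  show "open U" using assms unfolding holo_vec_def by blast
  fix z assume z: "z \<in> U"
  obtain L1 where L1: "(f has_derivative L1) (at z)" "\<forall>c v. L1 (c *s v) = c * L1 v"
    using assms(1) z unfolding holo_vec_def by blast
  obtain L2 where L2: "(g has_derivative L2) (at z)" "\<forall>c v. L2 (c *s v) = c * L2 v"
    using assms(2) z unfolding holo_vec_def by blast
  show "\<exists>L. ((\<lambda>v. f v * g v) has_derivative L) (at z) \<and> (\<forall>c v. L (c *s v) = c * L v)"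
    by (rule exI[of _ "\<lambda>v. f z * L2 v + L1 v * g z"], intro conjI has_derivative_mult[OF L1(1) L2(1)])
       (use L1 L2 in \<open>auto simp: algebra_simps\<close>)
qed

lemma holo_vec_sum:
  assumes "finite A" "open U" "\<And>a. a \<in> A \<Longrightarrow> holo_vec (f a) U"
  shows "holo_vec (\<lambda>v. \<Sum>a\<in>A. f a v) U"
  using assms by (induction A rule: finite_induct) (auto intro: holo_vec_add holo_vec_const)

lemma holo_vec_inv_fst:
  "holo_vec (\<lambda>v::complex^(unit+'m::finite). 1 / (\<zeta> - v $ Inl ())) {v. v $ Inl () \<noteq> \<zeta>}"
  unfolding holo_vec_def
proof (intro conjI ballI)
  show "open {v::complex^(unit+'m::finite). v $ Inl () \<noteq> \<zeta>}"
    by (intro open_Collect_neq continuous_intros)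
  fix z :: "complex^(unit+'m::finite)" assume z: "z \<in> {v. v $ Inl () \<noteq> \<zeta>}"
  have d: "((\<lambda>x. 1 / (\<zeta> - x)) has_field_derivative (1 / (\<zeta> - z $ Inl ())^2)) (at (z $ Inl ()))"
    using z by (auto intro!: derivative_eq_intros simp: power2_eq_square field_simps)
  have "((\<lambda>v. 1 / (\<zeta> - v $ Inl ())) has_derivative (\<lambda>h. (1 / (\<zeta> - z $ Inl ())^2) * (h $ Inl ()))) (at z)"
    using has_derivative_compose[OF bounded_linear_imp_has_derivative[OF bounded_linear_vec_nth[of "Inl ()"]]
        d[unfolded has_field_derivative_def]]
    by (simp add: o_def)
  then show "\<exists>L. ((\<lambda>v. 1 / (\<zeta> - v $ Inl ())) has_derivative L) (at z) \<and> (\<forall>c v. L (c *s v) = c * L v)"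
    by (intro exI[of _ "\<lambda>h. (1 / (\<zeta> - z $ Inl ())^2) * (h $ Inl ())"]) auto
qed

definition snd_vec :: "complex^(unit+'m::finite) \<Rightarrow> complex^'m" where
  "snd_vec v = (\<chi> j. v $ Inr j)"

lemma linear_snd_vec: "linear snd_vec"
  by (rule linearI) (auto simp: snd_vec_def vec_eq_iff)

lemma bounded_linear_snd_vec: "bounded_linear snd_vec"
  using linear_snd_vec linear_conv_bounded_linear by blast

lemma holo_vec_snd:
  fixes g :: "complex^'m::finite \<Rightarrow> complex"
  assumes "holo_vec g V"
  shows "holo_vec (\<lambda>v. g (snd_vec v)) {v. snd_vec v \<in> V}"
  unfolding holo_vec_def
proof (intro conjI ballI)
  show "open {v. snd_vec v \<in> V}"
    using assms unfolding holo_vec_def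
    by (intro open_vimage[unfolded vimage_def]) (auto intro: linear_continuous_on bounded_linear_snd_vec)
  fix z assume z: "z \<in> {v. snd_vec v \<in> V}"
  obtain L where L: "(g has_derivative L) (at (snd_vec z))" "\<forall>c v. L (c *s v) = c * L v"
    using assms z unfolding holo_vec_def by blast
  have "((\<lambda>v. g (snd_vec v)) has_derivative (\<lambda>h. L (snd_vec h))) (at z)"
    using has_derivative_compose[OF bounded_linear_imp_has_derivative[OF bounded_linear_snd_vec] L(1)]
    by (simp add: o_def)
  moreover have sv: "snd_vec (c *s v) = c *s snd_vec v" for c :: complex and v :: "complex^(unit+'m)"
    by (simp add: snd_vec_def vec_eq_iff)
  ultimately show "\<exists>L. ((\<lambda>v. g (snd_vec v)) has_derivative L) (at z) \<and> (\<forall>c v. L (c *s v) = c * L v)"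
    using L(2) by (intro exI[of _ "\<lambda>h. L (snd_vec h)"]) (simp add: sv)
qed

lemma joint_cont:
  fixes G :: "'a::metric_space \<Rightarrow> 'b::metric_space \<Rightarrow> complex"
  assumes eq: "\<And>x e. x\<in>A \<Longrightarrow> e>0 \<Longrightarrow> \<exists>d>0. \<forall>y\<in>A. dist y x < d \<longrightarrow> (\<forall>w\<in>B. dist (G y w) (G x w) < e)"
    and ct: "\<And>x. x\<in>A \<Longrightarrow> continuous_on B (G x)"
  shows "continuous_on (A \<times> B) (\<lambda>(x,w). G x w)"
  unfolding continuous_on_iff
proof (intro ballI allI impI)
  fix p e assume p: "p \<in> A \<times> B" and e: "(0::real) < e"
  obtain x w where xw: "p = (x,w)" "x \<in> A" "w \<in> B" using p by auto
  obtain d1 where d1: "d1 > 0" "\<forall>y\<in>A. dist y x < d1 \<longrightarrow> (\<forall>w\<in>B. dist (G y w) (G x w) < e/2)"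
    using eq[OF xw(2), of "e/2"] e by auto
  obtain d2 where d2: "d2 > 0" "\<forall>w'\<in>B. dist w' w < d2 \<longrightarrow> dist (G x w') (G x w) < e/2"
    using ct[OF xw(2)] xw(3) e unfolding continuous_on_iff by (meson half_gt_zero)
  show "\<exists>d>0. \<forall>p'\<in>A \<times> B. dist p' p < d \<longrightarrow> dist ((\<lambda>(x, w). G x w) p') ((\<lambda>(x, w). G x w) p) < e"
  proof (intro exI[of _ "min d1 d2"] conjI ballI impI)
    show "0 < min d1 d2" using d1 d2 by auto
    fix p' assume p': "p' \<in> A \<times> B" and dp: "dist p' p < min d1 d2"
    obtain y v where yv: "p' = (y,v)" "y \<in> A" "v \<in> B" using p' by auto
    have "dist y x < d1" using dp xw yv dist_fst_le[of p' p] by auto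
    hence 1: "dist (G y v) (G x v) < e/2" using d1 yv by auto
    have "dist v w < d2" using dp xw yv dist_snd_le[of p' p] by auto
    hence 2: "dist (G x v) (G x w) < e/2" using d2 yv by auto
    have "dist (G y v) (G x w) \<le> dist (G y v) (G x v) + dist (G x v) (G x w)" by (rule dist_triangle)
    then show "dist ((\<lambda>(x, w). G x w) p') ((\<lambda>(x, w). G x w) p) < e" using 1 2 xw yv by auto
  qed
qed

lemma Obar_bounded:
  assumes "g \<in> Obar K" "compact K"
  obtains M where "\<forall>w\<in>K. cmod (g w) \<le> M"
proof -
  have "compact (g ` K)" using assms by (intro compact_continuous_image) (auto simp: Obar_def)
  then obtain M where "\<forall>y\<in>g ` K. norm y \<le> M" using compact_imp_bounded bounded_iff by metis
  then show ?thesis using that by auto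
qed

lemma holoW_equicont:
  assumes "holoW K2 H U" "compact K2" "z0 \<in> U" "e > 0"
  shows "\<exists>d>0. \<forall>y. dist y z0 < d \<longrightarrow> y \<in> U \<and> (\<forall>w\<in>K2. dist (H y w) (H z0 w) < e)"
proof -
  obtain D where D: "D \<in> Obar K2" "uniform_limit K2 (\<lambda>t w. (H (z0 + t) w - H z0 w) / t) D (at 0)"
    using assms(1,3) unfolding holoW_def by blast
  obtain M where M: "\<forall>w\<in>K2. cmod (D w) \<le> M" using Obar_bounded[OF D(1) assms(2)] by blast
  have "\<forall>\<^sub>F t in at 0. \<forall>w\<in>K2. dist ((H (z0 + t) w - H z0 w) / t) (D w) < 1"
    using D(2) unfolding uniform_limit_iff by auto
  then obtain d1 where d1: "d1 > 0" "\<And>t. t \<noteq> 0 \<Longrightarrow> dist t 0 < d1 \<Longrightarrow> \<forall>w\<in>K2. dist ((H (z0 + t) w - H z0 w) / t) (D w) < 1"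
    unfolding eventually_at by blast
  obtain d2 where d2: "d2 > 0" "ball z0 d2 \<subseteq> U" using assms(1,3) unfolding holoW_def
    by (meson open_contains_ball)
  define M' where "M' = max M 0 + 1"
  have M': "M' > 0" unfolding M'_def by auto
  show ?thesis
  proof (intro exI[of _ "min (min d1 d2) (e / M')"] conjI allI impI)
    show "0 < min (min d1 d2) (e / M')" using d1 d2 M' assms(4) by auto
    fix y assume y: "dist y z0 < min (min d1 d2) (e / M')"
    show "y \<in> U" using y d2 by (auto simp: dist_commute)
    show "\<forall>w\<in>K2. dist (H y w) (H z0 w) < e"
    proof
      fix w assume w: "w \<in> K2"
      show "dist (H y w) (H z0 w) < e"
      proof (cases "y = z0")
        case True then show ?thesis using assms(4) by simp
      next
        case False
        define t where "t = y - z0"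
        have t0: "t \<noteq> 0" using False t_def by auto
        have "dist t 0 < d1" using y by (simp add: t_def dist_norm)
        hence "dist ((H (z0 + t) w - H z0 w) / t) (D w) < 1" using d1(2)[OF t0] w by auto
        hence "cmod ((H (z0 + t) w - H z0 w) / t) < 1 + M"
          using M w by (smt (verit) dist_commute dist_norm norm_triangle_ineq3 norm_minus_commute)
        hence q: "cmod ((H (z0 + t) w - H z0 w) / t) < M'" unfolding M'_def by auto
        have "cmod (H (z0 + t) w - H z0 w) = cmod t * cmod ((H (z0 + t) w - H z0 w) / t)"
          using t0 by (simp add: norm_divide)
        also have "\<dots> \<le> cmod t * M'" using q by (intro mult_left_mono) auto
        also have "\<dots> < e" using y M' by (simp add: t_def dist_norm pos_less_divide_eq)
        finally show ?thesis by (simp add: t_def dist_norm)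
      qed
    qed
  qed
qed

lemma holoW_holomorphic:
  assumes "holoW K2 H U" "w \<in> K2"
  shows "(\<lambda>z. H z w) holomorphic_on U"
  unfolding holomorphic_on_def
proof
  fix z assume z: "z \<in> U"
  obtain D where D: "D \<in> Obar K2" "uniform_limit K2 (\<lambda>t w. (H (z + t) w - H z w) / t) D (at 0)"
    using assms(1) z unfolding holoW_def by blast
  have "((\<lambda>t. (H (z + t) w - H z w) / t) \<longlongrightarrow> D w) (at 0)"
    using tendsto_uniform_limitI[OF D(2) assms(2)] .
  hence "((\<lambda>z. H z w) has_field_derivative D w) (at z)"
    by (simp add: DERIV_def)
  then show "(\<lambda>z. H z w) field_differentiable at z within U"
    using field_differentiable_at_within field_differentiable_def by blast
qed

lemma holoW_joint:
  assumes "holoW K2 H U" "compact K2"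
  shows "continuous_on (U \<times> K2) (\<lambda>(z,w). H z w)"
proof (rule joint_cont)
  fix x e assume "x \<in> U" "(0::real) < e"
  then show "\<exists>d>0. \<forall>y\<in>U. dist y x < d \<longrightarrow> (\<forall>w\<in>K2. dist (H y w) (H x w) < e)"
    using holoW_equicont[OF assms] by blast
next
  fix x assume "x \<in> U" then show "continuous_on K2 (H x)"
    using assms(1) unfolding holoW_def Obar_def by auto
qed

lemma ObarW_joint:
  assumes "F \<in> ObarW K1 K2"
  shows "continuous_on (K1 \<times> K2) (\<lambda>(z,w). F z w)"
proof (rule joint_cont)
  fix x e assume x: "x \<in> K1" and e: "(0::real) < e"
  have "uniform_limit K2 (\<lambda>y. F y) (F x) (at x within K1)" using assms x unfolding ObarW_def by blast
  hence "\<forall>\<^sub>F y in at x within K1. \<forall>w\<in>K2. dist (F y w) (F x w) < e" using e unfolding uniform_limit_iff by auto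
  then obtain d where d: "d>0" "\<And>y. y\<in>K1 \<Longrightarrow> y \<noteq> x \<Longrightarrow> dist y x < d \<Longrightarrow> \<forall>w\<in>K2. dist (F y w) (F x w) < e"
    unfolding eventually_at by blast
  show "\<exists>d>0. \<forall>y\<in>K1. dist y x < d \<longrightarrow> (\<forall>w\<in>K2. dist (F y w) (F x w) < e)"
  proof (intro exI[of _ d] conjI ballI impI)
    fix y w assume "y \<in> K1" "dist y x < d" "w \<in> K2"
    then show "dist (F y w) (F x w) < e" using d e by (cases "y = x") auto
  qed (use d in auto)
next
  fix x assume "x \<in> K1" then show "continuous_on K2 (F x)"
    using assms unfolding ObarW_def Obar_def by auto
qed

definition qp :: "complex \<Rightarrow> complex \<Rightarrow> nat \<Rightarrow> nat \<Rightarrow> complex" where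
  "qp a b n i = a + (of_nat i / of_nat n) * (b - a)"

lemma qp_in:
  assumes "i \<le> n" "n > 0" shows "qp a b n i \<in> closed_segment a b"
proof -
  define u :: real where "u = real i / real n"
  have u: "0 \<le> u" "u \<le> 1" using assms by (auto simp: u_def)
  have "qp a b n i = (1 - u) *\<^sub>R a + u *\<^sub>R b"
    using assms by (simp add: qp_def u_def scaleR_conv_of_real field_simps)
  then show ?thesis using u in_segment(1) by blast
qed

lemma qp_mid:
  assumes "i < n" shows "qp a b n i \<in> closed_segment a (qp a b n (Suc i))"
proof -
  define u :: real where "u = real i / real (Suc i)"
  have u: "0 \<le> u" "u \<le> 1" by (auto simp: u_def)
  have nz: "(1 + of_nat i :: complex) \<noteq> 0" "(of_nat n :: complex) \<noteq> 0"
    using assms by (auto simp del: of_nat_Suc simp: of_nat_Suc[symmetric])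
  have 1: "(1 - u) *\<^sub>R a + u *\<^sub>R (qp a b n (Suc i)) = a + (of_real u * (of_nat (Suc i) / of_nat n)) * (b - a)"
    by (simp add: qp_def scaleR_conv_of_real algebra_simps)
  have 2: "of_real u * (of_nat (Suc i) / of_nat n) = (of_nat i / of_nat n :: complex)"
    using nz by (simp add: u_def field_simps del: of_nat_Suc)
  have "qp a b n i = (1 - u) *\<^sub>R a + u *\<^sub>R (qp a b n (Suc i))"
    unfolding 1 2 by (simp add: qp_def)
  then show ?thesis using u in_segment(1) by blast
qed

lemma qp_sub:
  assumes "i < n" shows "closed_segment (qp a b n i) (qp a b n (Suc i)) \<subseteq> closed_segment a b"
  using assms by (intro closed_segment_subset qp_in convex_closed_segment) auto

lemma qp_n: "n > 0 \<Longrightarrow> qp a b n n = b" by (simp add: qp_def)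
lemma qp_0: "qp a b n 0 = a" by (simp add: qp_def)

lemma qp_diff: "n > 0 \<Longrightarrow> qp a b n (Suc i) - qp a b n i = (b - a) / of_nat n"
  by (simp add: qp_def field_simps)

lemma split_linepath_sum:
  assumes f: "continuous_on (closed_segment a b) f" and n: "n > 0"
  shows "contour_integral (linepath a b) f = (\<Sum>i<n. contour_integral (linepath (qp a b n i) (qp a b n (Suc i))) f)"
proof -
  have "m \<le> n \<Longrightarrow> contour_integral (linepath a (qp a b n m)) f = (\<Sum>i<m. contour_integral (linepath (qp a b n i) (qp a b n (Suc i))) f)" for m
  proof (induction m)
    case 0 then show ?case by (simp only: qp_0 contour_integral_trivial) simp
  next
    case (Suc m)
    have sub: "closed_segment a (qp a b n (Suc m)) \<subseteq> closed_segment a b"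
      using Suc.prems n by (intro closed_segment_subset qp_in convex_closed_segment) auto
    have "contour_integral (linepath a (qp a b n (Suc m))) f =
        contour_integral (linepath a (qp a b n m)) f + contour_integral (linepath (qp a b n m) (qp a b n (Suc m))) f"
      by (rule contour_integral_split_linepath[OF continuous_on_subset[OF f sub] qp_mid]) (use Suc.prems in auto)
    then show ?case using Suc by simp
  qed
  from this[of n] show ?thesis using n by (simp add: qp_n)
qed

lemma riemann_linepath:
  fixes \<phi> :: "complex \<Rightarrow> 'p::metric_space \<Rightarrow> complex"
  assumes P: "compact P" and ct: "continuous_on (closed_segment a b \<times> P) (\<lambda>(\<zeta>,p). \<phi> \<zeta> p)" and e: "e > 0"
  shows "\<exists>n>0. \<forall>p\<in>P. cmod (contour_integral (linepath a b) (\<lambda>\<zeta>. \<phi> \<zeta> p)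
            - (\<Sum>i<n. \<phi> (qp a b n i) p * ((b - a) / of_nat n))) \<le> e"
proof -
  define e' where "e' = e / (cmod (b - a) + 1)"
  have e': "e' > 0" using e by (auto simp: e'_def intro!: divide_pos_pos add_nonneg_pos)
  have "uniformly_continuous_on (closed_segment a b \<times> P) (\<lambda>(\<zeta>,p). \<phi> \<zeta> p)"
    using ct P by (intro compact_uniformly_continuous compact_Times) auto
  then obtain d where d: "d > 0" "\<And>x x'. x \<in> closed_segment a b \<times> P \<Longrightarrow> x' \<in> closed_segment a b \<times> P \<Longrightarrow>
      dist x' x < d \<Longrightarrow> dist ((\<lambda>(\<zeta>,p). \<phi> \<zeta> p) x') ((\<lambda>(\<zeta>,p). \<phi> \<zeta> p) x) < e'"
    unfolding uniformly_continuous_on_def using e' by metis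
  obtain n :: nat where n: "real n > cmod (b - a) / d" using reals_Archimedean2 by blast
  have n0: "n > 0" using n d by (metis divide_nonneg_pos norm_ge_zero not_gr0 of_nat_0 order.strict_trans1 order_less_irrefl)
  have step: "cmod (b - a) / real n < d" using n n0 d by (simp add: field_simps)
  show ?thesis
  proof (intro exI[of _ n] conjI ballI)
    show "n > 0" by fact
    fix p assume p: "p \<in> P"
    have cp: "continuous_on (closed_segment a b) (\<lambda>\<zeta>. \<phi> \<zeta> p)"
    proof -
      have "continuous_on (closed_segment a b) ((\<lambda>(\<zeta>,p). \<phi> \<zeta> p) \<circ> (\<lambda>\<zeta>. (\<zeta>,p)))"
        by (rule continuous_on_compose[OF _ continuous_on_subset[OF ct]]) (auto intro!: continuous_intros simp: p)
      then show ?thesis by (simp add: o_def)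
    qed
    let ?q = "qp a b n"
    have piece: "cmod (contour_integral (linepath (?q i) (?q (Suc i))) (\<lambda>\<zeta>. \<phi> \<zeta> p) - \<phi> (?q i) p * ((b - a) / of_nat n))
        \<le> e' * (cmod (b - a) / real n)" if i: "i < n" for i
    proof -
      have sub: "closed_segment (?q i) (?q (Suc i)) \<subseteq> closed_segment a b" using qp_sub[OF i] .
      have int: "((\<lambda>\<zeta>. \<phi> \<zeta> p) has_contour_integral contour_integral (linepath (?q i) (?q (Suc i))) (\<lambda>\<zeta>. \<phi> \<zeta> p)) (linepath (?q i) (?q (Suc i)))"
        by (intro has_contour_integral_integral contour_integrable_continuous_linepath continuous_on_subset[OF cp sub])
      have "((\<lambda>\<zeta>. \<phi> \<zeta> p - \<phi> (?q i) p) has_contour_integral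
          (contour_integral (linepath (?q i) (?q (Suc i))) (\<lambda>\<zeta>. \<phi> \<zeta> p) - \<phi> (?q i) p * (?q (Suc i) - ?q i))) (linepath (?q i) (?q (Suc i)))"
        by (rule has_contour_integral_diff[OF int has_contour_integral_const_linepath])
      then have "cmod (contour_integral (linepath (?q i) (?q (Suc i))) (\<lambda>\<zeta>. \<phi> \<zeta> p) - \<phi> (?q i) p * (?q (Suc i) - ?q i))
          \<le> e' * cmod (?q (Suc i) - ?q i)"
      proof (rule has_contour_integral_bound_linepath)
        show "0 \<le> e'" using e' by simp
        fix x assume x: "x \<in> closed_segment (?q i) (?q (Suc i))"
        have "dist x (?q i) \<le> cmod (?q (Suc i) - ?q i)"
          using segment_bound(1)[OF x] by (simp add: dist_norm)
        also have "\<dots> < d" using step qp_diff[OF n0] by (simp add: norm_divide)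
        finally have "dist (x, p) (?q i, p) < d" by (simp add: dist_Pair_Pair)
        moreover have "?q i \<in> closed_segment a b" using qp_in i n0 by auto
        ultimately have "dist (\<phi> x p) (\<phi> (?q i) p) < e'"
          using d(2)[of "(?q i, p)" "(x, p)"] sub x p by auto
        then show "cmod (\<phi> x p - \<phi> (?q i) p) \<le> e'" by (simp add: dist_norm)
      qed
      then show ?thesis using qp_diff[OF n0] by (simp add: norm_divide)
    qed
    have "contour_integral (linepath a b) (\<lambda>\<zeta>. \<phi> \<zeta> p) - (\<Sum>i<n. \<phi> (?q i) p * ((b - a) / of_nat n))
        = (\<Sum>i<n. contour_integral (linepath (?q i) (?q (Suc i))) (\<lambda>\<zeta>. \<phi> \<zeta> p) - \<phi> (?q i) p * ((b - a) / of_nat n))"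
      using split_linepath_sum[OF cp n0] by (simp add: sum_subtractf)
    also have "cmod \<dots> \<le> (\<Sum>i<n. e' * (cmod (b - a) / real n))"
      by (rule order_trans[OF norm_sum sum_mono]) (use piece in auto)
    also have "\<dots> = e' * cmod (b - a)" using n0 by simp
    also have "\<dots> \<le> e"
    proof -
      have "0 < 1 + cmod (b - a)" by (smt (verit) norm_ge_zero)
      then show ?thesis using e unfolding e'_def by (simp add: pos_divide_le_eq)
    qed
    finally show "cmod (contour_integral (linepath a b) (\<lambda>\<zeta>. \<phi> \<zeta> p) - (\<Sum>i<n. \<phi> (?q i) p * ((b - a) / of_nat n))) \<le> e" .
  qed
qed

lemma cint_isCont:
  assumes h: "continuous_on (closed_segment a b) h" and z: "z \<notin> closed_segment a b"
  shows "isCont (\<lambda>y. contour_integral (linepath a b) (\<lambda>\<zeta>. h \<zeta> / (\<zeta> - y))) z"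
proof -
  have int: "((\<lambda>u. h u / (u - w)^1) has_contour_integral contour_integral (linepath a b) (\<lambda>\<zeta>. h \<zeta> / (\<zeta> - w))) (linepath a b)"
    if "w \<in> UNIV - path_image (linepath a b)" for w
  proof -
    have "continuous_on (closed_segment a b) (\<lambda>\<zeta>. h \<zeta> / (\<zeta> - w))"
      using that h by (intro continuous_intros) auto
    then show ?thesis by (simp add: has_contour_integral_integral contour_integrable_continuous_linepath)
  qed
  have "((\<lambda>y. contour_integral (linepath a b) (\<lambda>\<zeta>. h \<zeta> / (\<zeta> - y))) has_field_derivative
       (of_nat 1 * contour_integral (linepath a b) (\<lambda>u. h u / (u - z)^Suc 1))) (at z)"
    by (rule Cauchy_next_derivative(2)[where B = "cmod (b - a)" and S = UNIV, OF _ _ int])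
       (use h z in auto)
  then show ?thesis using DERIV_isCont by blast
qed

lemma square_cauchy:
  assumes bU: "ball c r \<subseteq> U" and sq: "cbox p q \<subseteq> ball c r" and pq: "Re p < Re q" "Im p < Im q"
    and h: "h holomorphic_on U" and z: "z \<notin> path_image (rectpath p q)"
  shows "contour_integral (rectpath p q) (\<lambda>\<zeta>. h \<zeta> / (\<zeta> - z)) = (if z \<in> box p q then 2 * pi * \<i> * h z else 0)"
proof -
  have pim: "path_image (rectpath p q) = cbox p q - box p q"
    using pq by (intro path_image_rectpath_cbox_minus_box) auto
  have hb: "h holomorphic_on ball c r" using h bU holomorphic_on_subset by blast
  show ?thesis
  proof (cases "z \<in> ball c r")
    case True
    have "((\<lambda>\<zeta>. h \<zeta> / (\<zeta> - z)) has_contour_integral (2*pi * \<i> * winding_number (rectpath p q) z * h z)) (rectpath p q)"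
      by (rule Cauchy_integral_formula_convex_simple[OF convex_ball hb]) (use True sq pim z in auto)
    moreover have "winding_number (rectpath p q) z = (if z \<in> box p q then 1 else 0)"
    proof (cases "z \<in> box p q")
      case True then show ?thesis by (simp add: winding_number_rectpath)
    next
      case False
      then have "z \<notin> cbox p q" using z pim by auto
      then show ?thesis using False pq by (simp add: winding_number_rectpath_outside)
    qed
    ultimately show ?thesis using contour_integral_unique by fastforce
  next
    case False
    then have nb: "z \<notin> box p q" using sq box_subset_cbox by blast
    have "((\<lambda>\<zeta>. h \<zeta> / (\<zeta> - z)) has_contour_integral 0) (rectpath p q)"
      by (rule Cauchy_theorem_convex_simple[OF _ convex_ball])
         (use False hb sq pim in \<open>auto intro!: holomorphic_intros\<close>)
    then show ?thesis using nb contour_integral_unique by fastforce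
  qed
qed

lemma rect_split:
  assumes f: "continuous_on (path_image (rectpath p q)) f"
  defines "p2 \<equiv> Complex (Re q) (Im p)" and "p4 \<equiv> Complex (Re p) (Im q)"
  shows "contour_integral (rectpath p q) f = contour_integral (linepath p p2) f + contour_integral (linepath p2 q) f
          - contour_integral (linepath p4 q) f - contour_integral (linepath p p4) f"
proof -
  have pim: "path_image (rectpath p q) = closed_segment p p2 \<union> (closed_segment p2 q \<union> (closed_segment q p4 \<union> closed_segment p4 p))"
    unfolding rectpath_def Let_def p2_def[symmetric] p4_def[symmetric]
    by (simp add: path_image_join)
  have ct: "continuous_on (closed_segment p p2) f" "continuous_on (closed_segment p2 q) f"
     "continuous_on (closed_segment q p4) f" "continuous_on (closed_segment p4 p) f"
    using f unfolding pim by (auto elim: continuous_on_subset)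
  have ci: "f contour_integrable_on linepath p p2" "f contour_integrable_on linepath p2 q"
     "f contour_integrable_on linepath q p4" "f contour_integrable_on linepath p4 p"
    using ct by (auto intro: contour_integrable_continuous_linepath)
  have "contour_integral (rectpath p q) f = contour_integral (linepath p p2) f + (contour_integral (linepath p2 q) f
          + (contour_integral (linepath q p4) f + contour_integral (linepath p4 p) f))"
    unfolding rectpath_def Let_def p2_def[symmetric] p4_def[symmetric]
    using ci by (simp add: contour_integrable_joinI)
  moreover have "contour_integral (linepath q p4) f = - contour_integral (linepath p4 q) f"
    using contour_integral_reverse_linepath[OF ct(3)] .
  moreover have "contour_integral (linepath p4 p) f = - contour_integral (linepath p p4) f"
    using contour_integral_reverse_linepath[OF ct(4)] .
  ultimately show ?thesis by simp
qed

lemma shift_sum: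
  fixes g :: "'a \<Rightarrow> complex"
  assumes R: "finite R" and I: "finite I" and sh: "inj sh" and sub: "sh ` I \<subseteq> R"
  shows "(\<Sum>x\<in>I. g (sh x)) = (\<Sum>y\<in>R. (if y \<in> sh ` I then g y else 0))"
proof -
  have "(\<Sum>x\<in>I. g (sh x)) = (\<Sum>y\<in>sh ` I. g y)"
    using sh by (simp add: sum.reindex inj_on_def inj_def)
  also have "\<dots> = (\<Sum>y\<in>R \<inter> sh ` I. g y)" using sub by (simp add: Int_absorb1)
  also have "\<dots> = (\<Sum>y\<in>R. (if y \<in> sh ` I then g y else 0))"
    using R by (simp add: sum.inter_restrict)
  finally show ?thesis .
qed

definition ind :: "(int \<times> int) set \<Rightarrow> int \<times> int \<Rightarrow> complex" where
  "ind I x = (if x \<in> I then 1 else 0)"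

lemma grid_sum:
  fixes Hf Vf :: "int \<times> int \<Rightarrow> complex"
  assumes R: "finite R" and I: "finite I"
    and sub: "\<And>i j. (i,j) \<in> I \<Longrightarrow> (i,j) \<in> R \<and> (i+1,j) \<in> R \<and> (i,j+1) \<in> R"
  shows "(\<Sum>(i,j)\<in>I. Hf (i,j) + Vf (i+1,j) - Hf (i,j+1) - Vf (i,j))
       = (\<Sum>(i,j)\<in>R. (ind I (i,j) - ind I (i,j-1)) * Hf (i,j) + (ind I (i-1,j) - ind I (i,j)) * Vf (i,j))"
proof -
  define up where "up = (\<lambda>(i::int,j::int). (i,j+1))"
  define rt where "rt = (\<lambda>(i::int,j::int). (i+1,j))"
  have injup: "inj up" unfolding up_def inj_def by auto
  have injrt: "inj rt" unfolding rt_def inj_def by auto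
  have upI: "y \<in> up ` I \<longleftrightarrow> (fst y, snd y - 1) \<in> I" for y
    unfolding up_def by (cases y) (force simp: image_iff)
  have rtI: "y \<in> rt ` I \<longleftrightarrow> (fst y - 1, snd y) \<in> I" for y
    unfolding rt_def by (cases y) (force simp: image_iff)
  have s1: "(\<Sum>x\<in>I. Hf x) = (\<Sum>y\<in>R. ind I y * Hf y)"
  proof -
    have "(\<Sum>x\<in>I. Hf (id x)) = (\<Sum>y\<in>R. (if y \<in> id ` I then Hf y else 0))"
      using sub by (intro shift_sum R I) auto
    then show ?thesis by (auto simp: ind_def intro!: sum.cong)
  qed
  have s2: "(\<Sum>x\<in>I. Vf x) = (\<Sum>y\<in>R. ind I y * Vf y)"
  proof -
    have "(\<Sum>x\<in>I. Vf (id x)) = (\<Sum>y\<in>R. (if y \<in> id ` I then Vf y else 0))"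
      using sub by (intro shift_sum R I) auto
    then show ?thesis by (auto simp: ind_def intro!: sum.cong)
  qed
  have s3: "(\<Sum>x\<in>I. Hf (up x)) = (\<Sum>y\<in>R. ind I (fst y, snd y - 1) * Hf y)"
  proof -
    have "(\<Sum>x\<in>I. Hf (up x)) = (\<Sum>y\<in>R. (if y \<in> up ` I then Hf y else 0))"
      using sub injup by (intro shift_sum R I) (auto simp: up_def)
    then show ?thesis unfolding upI by (auto simp: ind_def intro!: sum.cong)
  qed
  have s4: "(\<Sum>x\<in>I. Vf (rt x)) = (\<Sum>y\<in>R. ind I (fst y - 1, snd y) * Vf y)"
  proof -
    have "(\<Sum>x\<in>I. Vf (rt x)) = (\<Sum>y\<in>R. (if y \<in> rt ` I then Vf y else 0))"
      using sub injrt by (intro shift_sum R I) (auto simp: rt_def)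
    then show ?thesis unfolding rtI by (auto simp: ind_def intro!: sum.cong)
  qed
  have "(\<Sum>(i,j)\<in>I. Hf (i,j) + Vf (i+1,j) - Hf (i,j+1) - Vf (i,j))
      = (\<Sum>x\<in>I. Hf x) + (\<Sum>x\<in>I. Vf (rt x)) - (\<Sum>x\<in>I. Hf (up x)) - (\<Sum>x\<in>I. Vf x)"
    by (simp add: sum.distrib sum_subtractf case_prod_beta up_def rt_def)
  also have "\<dots> = (\<Sum>y\<in>R. ind I y * Hf y + ind I (fst y - 1, snd y) * Vf y - ind I (fst y, snd y - 1) * Hf y - ind I y * Vf y)"
    unfolding s1 s2 s3 s4 by (simp add: sum.distrib sum_subtractf)
  also have "\<dots> = (\<Sum>(i,j)\<in>R. (ind I (i,j) - ind I (i,j-1)) * Hf (i,j) + (ind I (i-1,j) - ind I (i,j)) * Vf (i,j))"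
    by (intro sum.cong) (auto simp: algebra_simps)
  finally show ?thesis .
qed

lemma int_le_ceil: "of_int i \<le> (x::real) \<Longrightarrow> i \<le> \<lceil>x\<rceil>"
  by (meson ceiling_le_iff le_ceiling_iff le_of_int_ceiling of_int_le_iff order_trans)

lemma grid_unique:
  fixes \<delta> r :: real and i i0 :: int
  assumes "\<delta> > 0" "of_int i * \<delta> \<le> r" "r < (of_int i0 + 1) * \<delta>" "of_int i0 * \<delta> < r" "r \<le> (of_int i + 1) * \<delta>"
  shows "i = i0"
proof -
  have "of_int i * \<delta> < (of_int i0 + 1) * \<delta>" "of_int i0 * \<delta> < (of_int i + 1) * \<delta>" using assms by linarith+
  then have "of_int i < (of_int i0 + 1 :: real)" "of_int i0 < (of_int i + 1 :: real)" using assms(1) by simp_all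
  then have "i < i0 + 1" "i0 < i + 1" by linarith+
  then show ?thesis by simp
qed

lemma grid_cauchy:
  assumes K: "compact K" and U: "open U" "K \<subseteq> U"
  obtains E :: "((int \<times> int) \<times> bool) set" and a b c :: "(int \<times> int) \<times> bool \<Rightarrow> complex"
  where "finite E"
    "\<And>e. e \<in> E \<Longrightarrow> closed_segment (a e) (b e) \<subseteq> U"
    "\<And>e. e \<in> E \<Longrightarrow> closed_segment (a e) (b e) \<inter> K = {}"
    "\<And>h z. h holomorphic_on U \<Longrightarrow> z \<in> K \<Longrightarrow>
        h z = (\<Sum>e\<in>E. c e * contour_integral (linepath (a e) (b e)) (\<lambda>\<zeta>. h \<zeta> / (\<zeta> - z)))"
proof -
  obtain \<epsilon> where \<epsilon>: "\<epsilon> > 0" "(\<Union>x\<in>K. ball x \<epsilon>) \<subseteq> U"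
    using compact_subset_open_imp_ball_epsilon_subset[OF K U] by blast
  define \<delta> where "\<delta> = \<epsilon> / 3"
  have \<delta>: "\<delta> > 0" using \<epsilon> by (simp add: \<delta>_def)
  define p :: "int \<times> int \<Rightarrow> complex" where "p x = Complex (of_int (fst x) * \<delta>) (of_int (snd x) * \<delta>)" for x
  define sq where "sq x = cbox (p x) (p (fst x + 1, snd x + 1))" for x
  define I where "I = {x. sq x \<inter> K \<noteq> {}}"
  have Rep: "Re (p x) = of_int (fst x) * \<delta>" "Im (p x) = of_int (snd x) * \<delta>" for x by (simp_all add: p_def)
  have sq_iff: "y \<in> sq (i,j) \<longleftrightarrow> of_int i * \<delta> \<le> Re y \<and> Re y \<le> (of_int i + 1) * \<delta> \<and>
      of_int j * \<delta> \<le> Im y \<and> Im y \<le> (of_int j + 1) * \<delta>" for y i j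
    by (simp add: sq_def in_cbox_complex_iff Rep)
  obtain B where B: "\<And>z. z \<in> K \<Longrightarrow> cmod z \<le> B"
    using compact_imp_bounded[OF K] bounded_iff by blast
  define N :: int where "N = \<lceil>B / \<delta>\<rceil> + 1"
  have Ibound: "-N \<le> i \<and> i \<le> N \<and> -N \<le> j \<and> j \<le> N" if ij: "(i,j) \<in> I" for i j
  proof -
    obtain y where y: "y \<in> sq (i,j)" "y \<in> K" using ij unfolding I_def by blast
    have "\<bar>Re y\<bar> \<le> B" "\<bar>Im y\<bar> \<le> B" using B[OF y(2)] abs_Re_le_cmod abs_Im_le_cmod order_trans by blast+
    then have 1: "of_int i * \<delta> \<le> B" "-B \<le> (of_int i + 1) * \<delta>" "of_int j * \<delta> \<le> B" "-B \<le> (of_int j + 1) * \<delta>"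
      using y(1) unfolding sq_iff by auto
    have "of_int i \<le> B / \<delta>" "of_int j \<le> B / \<delta>" using 1 \<delta> by (simp_all add: pos_le_divide_eq)
    then have a: "i \<le> \<lceil>B / \<delta>\<rceil>" "j \<le> \<lceil>B / \<delta>\<rceil>" using int_le_ceil by auto
    have "(- B) / \<delta> \<le> of_int i + 1" using 1(2) \<delta> by (subst pos_divide_le_eq) auto
    moreover have "(- B) / \<delta> \<le> of_int j + 1" using 1(4) \<delta> by (subst pos_divide_le_eq) auto
    ultimately have "- (B / \<delta>) \<le> of_int i + 1" "- (B / \<delta>) \<le> of_int j + 1" by simp_all
    then have "- (of_int (\<lceil>B / \<delta>\<rceil>)) \<le> (of_int i + 1 :: real)" "- (of_int (\<lceil>B / \<delta>\<rceil>)) \<le> (of_int j + 1 :: real)"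
      using le_of_int_ceiling[of "B/\<delta>"] by linarith+
    then have "- \<lceil>B / \<delta>\<rceil> \<le> i + 1" "- \<lceil>B / \<delta>\<rceil> \<le> j + 1" by linarith+
    then show ?thesis using a unfolding N_def by auto
  qed
  define R where "R = {-N-1..N+1} \<times> {-N-1..N+1}"
  have finR: "finite R" unfolding R_def by auto
  have finI: "finite I"
    by (rule finite_subset[OF _ finR]) (use Ibound in \<open>force simp: R_def\<close>)
  have IR: "(i,j) \<in> R \<and> (i+1,j) \<in> R \<and> (i,j+1) \<in> R" if "(i,j) \<in> I" for i j
    using Ibound[OF that] unfolding R_def by auto
  define cen where "cen x = p x + Complex (\<delta>/2) (\<delta>/2)" for x
  have sq_ball: "sq x \<subseteq> ball (cen x) (3*\<delta>/2)" for x
  proof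
    fix y assume y: "y \<in> sq x"
    obtain i j where x: "x = (i,j)" by force
    have "\<bar>Re (y - cen x)\<bar> \<le> \<delta>/2" "\<bar>Im (y - cen x)\<bar> \<le> \<delta>/2"
      using y unfolding x sq_iff by (auto simp: cen_def Rep algebra_simps split: abs_split)
    then have "cmod (y - cen x) \<le> \<delta>" using cmod_le[of "y - cen x"] by linarith
    then show "y \<in> ball (cen x) (3*\<delta>/2)" using \<delta> by (simp add: dist_norm norm_minus_commute)
  qed
  have ball_U: "ball (cen x) (3*\<delta>/2) \<subseteq> U" if xI: "x \<in> I" for x
  proof
    fix y assume y: "y \<in> ball (cen x) (3*\<delta>/2)"
    obtain z0 where z0: "z0 \<in> sq x" "z0 \<in> K" using xI unfolding I_def by blast
    obtain i j where x: "x = (i,j)" by force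
    have "\<bar>Re (z0 - cen x)\<bar> \<le> \<delta>/2" "\<bar>Im (z0 - cen x)\<bar> \<le> \<delta>/2"
      using z0(1) unfolding x sq_iff by (auto simp: cen_def Rep algebra_simps split: abs_split)
    then have "dist z0 (cen x) \<le> \<delta>" using cmod_le[of "z0 - cen x"] by (simp add: dist_norm)
    moreover have "dist (cen x) y < 3*\<delta>/2" using y by simp
    ultimately have "dist z0 y < \<epsilon>" using dist_triangle[of z0 y "cen x"] \<delta>_def \<delta> by linarith
    then show "y \<in> U" using \<epsilon>(2) z0(2) by (meson UN_subset_iff mem_ball subsetD)
  qed
  have sq_U: "sq x \<subseteq> U" if "x \<in> I" for x using sq_ball ball_U[OF that] by blast
  have sq_K: "sq x \<inter> K = {}" if "x \<notin> I" for x using that unfolding I_def by auto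
  define a :: "(int \<times> int) \<times> bool \<Rightarrow> complex" where "a e = p (fst e)" for e
  define b :: "(int \<times> int) \<times> bool \<Rightarrow> complex" where
    "b e = (if snd e then p (fst (fst e) + 1, snd (fst e)) else p (fst (fst e), snd (fst e) + 1))" for e
  define ch where "ch x = ind I x - ind I (fst x, snd x - 1)" for x
  define cv where "cv x = ind I (fst x - 1, snd x) - ind I x" for x
  define c :: "(int \<times> int) \<times> bool \<Rightarrow> complex" where
    "c e = (if snd e then ch (fst e) else cv (fst e)) / (2 * pi * \<i>)" for e
  define E0 where "E0 = R \<times> (UNIV :: bool set)"
  define E where "E = {e \<in> E0. c e \<noteq> 0}"
  have finE: "finite E" unfolding E_def E0_def using finR by auto
  have segH: "closed_segment (p (i,j)) (p (i+1,j)) \<subseteq> sq (i,j) \<and> closed_segment (p (i,j)) (p (i+1,j)) \<subseteq> sq (i,j-1)" for i j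
    using \<delta> by (intro conjI closed_segment_subset convex_box) (auto simp: sq_def in_cbox_complex_iff Rep algebra_simps)
  have segV: "closed_segment (p (i,j)) (p (i,j+1)) \<subseteq> sq (i,j) \<and> closed_segment (p (i,j)) (p (i,j+1)) \<subseteq> sq (i-1,j)" for i j
    using \<delta> by (intro conjI closed_segment_subset convex_box) (auto simp: sq_def in_cbox_complex_iff Rep algebra_simps)
  have edge_ok: "closed_segment (a e) (b e) \<subseteq> U \<and> closed_segment (a e) (b e) \<inter> K = {}" if eE: "e \<in> E" for e
  proof -
    obtain i j t where e: "e = ((i,j),t)" by (metis prod.collapse)
    have cne: "c e \<noteq> 0" using eE unfolding E_def by auto
    show ?thesis
    proof (cases t)
      case True
      then have "ch (i,j) \<noteq> 0" using cne unfolding c_def e by auto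
      then have "((i,j) \<in> I \<and> (i,j-1) \<notin> I) \<or> ((i,j) \<notin> I \<and> (i,j-1) \<in> I)"
        unfolding ch_def ind_def by (auto split: if_splits)
      then have "closed_segment (p (i,j)) (p (i+1,j)) \<subseteq> U \<and> closed_segment (p (i,j)) (p (i+1,j)) \<inter> K = {}"
      proof (elim disjE conjE)
        assume "(i,j) \<in> I" "(i,j-1) \<notin> I"
        then show ?thesis using segH[of i j] sq_U[of "(i,j)"] sq_K[of "(i,j-1)"] by auto
      next
        assume "(i,j) \<notin> I" "(i,j-1) \<in> I"
        then show ?thesis using segH[of i j] sq_U[of "(i,j-1)"] sq_K[of "(i,j)"] by auto
      qed
      moreover have "a e = p (i,j)" "b e = p (i+1,j)" using True by (simp_all add: a_def b_def e)
      ultimately show ?thesis by simp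
    next
      case False
      then have "cv (i,j) \<noteq> 0" using cne unfolding c_def e by auto
      then have "((i,j) \<in> I \<and> (i-1,j) \<notin> I) \<or> ((i,j) \<notin> I \<and> (i-1,j) \<in> I)"
        unfolding cv_def ind_def by (auto split: if_splits)
      then have "closed_segment (p (i,j)) (p (i,j+1)) \<subseteq> U \<and> closed_segment (p (i,j)) (p (i,j+1)) \<inter> K = {}"
      proof (elim disjE conjE)
        assume "(i,j) \<in> I" "(i-1,j) \<notin> I"
        then show ?thesis using segV[of i j] sq_U[of "(i,j)"] sq_K[of "(i-1,j)"] by auto
      next
        assume "(i,j) \<notin> I" "(i-1,j) \<in> I"
        then show ?thesis using segV[of i j] sq_U[of "(i-1,j)"] sq_K[of "(i,j)"] by auto
      qed
      moreover have "a e = p (i,j)" "b e = p (i,j+1)" using False by (simp_all add: a_def b_def e)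
      ultimately show ?thesis by simp
    qed
  qed
  have ident: "h z = (\<Sum>e\<in>E. c e * contour_integral (linepath (a e) (b e)) (\<lambda>\<zeta>. h \<zeta> / (\<zeta> - z)))"
    if h: "h holomorphic_on U" and z: "z \<in> K" for h z
  proof -
    define G where "G y = (\<Sum>e\<in>E. c e * contour_integral (linepath (a e) (b e)) (\<lambda>\<zeta>. h \<zeta> / (\<zeta> - y)))" for y
    have hc: "continuous_on U h" using h holomorphic_on_imp_continuous_on by blast
    have zU: "z \<in> U" using z U by auto
    have cont: "isCont (\<lambda>y. G y - h y) z"
    proof -
      have "isCont G z" unfolding G_def
      proof (intro continuous_sum continuous_mult continuous_const)
        fix e assume eE: "e \<in> E"
        show "isCont (\<lambda>y. contour_integral (linepath (a e) (b e)) (\<lambda>\<zeta>. h \<zeta> / (\<zeta> - y))) z"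
          using edge_ok[OF eE] z by (intro cint_isCont continuous_on_subset[OF hc]) auto
      qed
      moreover have "isCont h z" using hc zU U(1) continuous_on_eq_continuous_at by blast
      ultimately show ?thesis by (intro continuous_diff)
    qed
    have corner: "Complex (Re (p (i+1,j+1))) (Im (p (i,j))) = p (i+1,j)"
       "Complex (Re (p (i,j))) (Im (p (i+1,j+1))) = p (i,j+1)" for i j by (simp_all add: p_def)
    have pim: "path_image (rectpath (p x) (p (fst x + 1, snd x + 1))) = sq x - box (p x) (p (fst x + 1, snd x + 1))" for x
      using \<delta> by (simp add: sq_def path_image_rectpath_cbox_minus_box Rep)
    have key: "h z' = G z'" if z'box: "z' \<in> box (p x0) (p (fst x0 + 1, snd x0 + 1))" and x0I: "x0 \<in> I" for z' x0
    proof -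
      define f where "f \<zeta> = h \<zeta> / (\<zeta> - z')" for \<zeta>
      define Hf where "Hf x = contour_integral (linepath (p x) (p (fst x + 1, snd x))) f" for x
      define Vf where "Vf x = contour_integral (linepath (p x) (p (fst x, snd x + 1))) f" for x
      have notsq: "z' \<notin> sq x" if "x \<noteq> x0" for x
      proof
        assume "z' \<in> sq x"
        obtain i j where x: "x = (i,j)" by force
        obtain i0 j0 where x0: "x0 = (i0,j0)" by force
        have A: "of_int i * \<delta> \<le> Re z'" "Re z' \<le> (of_int i + 1) * \<delta>" "of_int j * \<delta> \<le> Im z'" "Im z' \<le> (of_int j + 1) * \<delta>"
          using \<open>z' \<in> sq x\<close> unfolding x sq_iff by auto
        have B: "of_int i0 * \<delta> < Re z'" "Re z' < (of_int i0 + 1) * \<delta>" "of_int j0 * \<delta> < Im z'" "Im z' < (of_int j0 + 1) * \<delta>"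
          using z'box unfolding x0 by (auto simp: in_box_complex_iff Rep algebra_simps)
        have "i = i0" using grid_unique[OF \<delta> A(1) B(2) B(1) A(2)] .
        moreover have "j = j0" using grid_unique[OF \<delta> A(3) B(4) B(3) A(4)] .
        ultimately show False using that x x0 by simp
      qed
      have z'sq: "z' \<in> sq x0" using z'box box_subset_cbox unfolding sq_def by blast
      have z'pim: "z' \<notin> path_image (rectpath (p x) (p (fst x + 1, snd x + 1)))" for x
        using notsq[of x] z'box unfolding pim by (cases "x = x0") auto
      have rect: "contour_integral (rectpath (p x) (p (fst x + 1, snd x + 1))) f = (if x = x0 then 2*pi*\<i>*h z' else 0)"
        if xI: "x \<in> I" for x
      proof -
        have "contour_integral (rectpath (p x) (p (fst x + 1, snd x + 1))) f
            = (if z' \<in> box (p x) (p (fst x + 1, snd x + 1)) then 2 * pi * \<i> * h z' else 0)"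
          unfolding f_def
          by (rule square_cauchy[OF ball_U[OF xI] sq_ball[of x, unfolded sq_def] _ _ h z'pim])
             (use \<delta> in \<open>auto simp: Rep\<close>)
        moreover have "z' \<in> box (p x) (p (fst x + 1, snd x + 1)) \<longleftrightarrow> x = x0"
          using notsq[of x] z'box box_subset_cbox unfolding sq_def by blast
        ultimately show ?thesis by simp
      qed
      have rsplit: "contour_integral (rectpath (p x) (p (fst x + 1, snd x + 1))) f
           = Hf x + Vf (fst x + 1, snd x) - Hf (fst x, snd x + 1) - Vf x" if xI: "x \<in> I" for x
      proof -
        obtain i j where x: "x = (i,j)" by force
        have "continuous_on (path_image (rectpath (p x) (p (fst x + 1, snd x + 1)))) f"
          unfolding f_def
          by (intro continuous_intros continuous_on_subset[OF hc])
             (use sq_U[OF xI] z'pim[of x] pim in auto)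
        from rect_split[OF this] show ?thesis unfolding x by (simp add: corner Hf_def Vf_def)
      qed
      have "2*pi*\<i>*h z' = (\<Sum>x\<in>I. contour_integral (rectpath (p x) (p (fst x + 1, snd x + 1))) f)"
        using x0I finI by (simp add: rect)
      also have "\<dots> = (\<Sum>(i,j)\<in>I. Hf (i,j) + Vf (i+1,j) - Hf (i,j+1) - Vf (i,j))"
        by (intro sum.cong refl) (auto simp: rsplit)
      also have "\<dots> = (\<Sum>(i,j)\<in>R. (ind I (i,j) - ind I (i,j-1)) * Hf (i,j) + (ind I (i-1,j) - ind I (i,j)) * Vf (i,j))"
        by (rule grid_sum[OF finR finI IR])
      also have "\<dots> = (\<Sum>x\<in>R. ch x * Hf x + cv x * Vf x)"
        by (intro sum.cong refl) (auto simp: ch_def cv_def)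
      also have "\<dots> = 2*pi*\<i> * (\<Sum>x\<in>R. \<Sum>t\<in>UNIV. c (x,t) * contour_integral (linepath (a (x,t)) (b (x,t))) f)"
        by (simp add: sum_distrib_left UNIV_bool c_def a_def b_def Hf_def Vf_def algebra_simps)
      also have "\<dots> = 2*pi*\<i> * (\<Sum>e\<in>E0. c e * contour_integral (linepath (a e) (b e)) f)"
        unfolding E0_def by (simp add: sum.cartesian_product)
      also have "(\<Sum>e\<in>E0. c e * contour_integral (linepath (a e) (b e)) f) = (\<Sum>e\<in>E. c e * contour_integral (linepath (a e) (b e)) f)"
        by (rule sum.mono_neutral_right) (use finR in \<open>auto simp: E0_def E_def\<close>)
      finally show ?thesis unfolding G_def f_def by simp
    qed
    define i0 where "i0 = \<lfloor>Re z / \<delta>\<rfloor>"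
    define j0 where "j0 = \<lfloor>Im z / \<delta>\<rfloor>"
    have fl: "of_int i0 * \<delta> \<le> Re z" "Re z < (of_int i0 + 1) * \<delta>" "of_int j0 * \<delta> \<le> Im z" "Im z < (of_int j0 + 1) * \<delta>"
    proof -
      have "of_int i0 \<le> Re z / \<delta>" "Re z / \<delta> < of_int i0 + 1" "of_int j0 \<le> Im z / \<delta>" "Im z / \<delta> < of_int j0 + 1"
        unfolding i0_def j0_def by linarith+
      then show "of_int i0 * \<delta> \<le> Re z" "Re z < (of_int i0 + 1) * \<delta>" "of_int j0 * \<delta> \<le> Im z" "Im z < (of_int j0 + 1) * \<delta>"
        using \<delta> by (simp_all add: pos_le_divide_eq pos_divide_less_eq)
    qed
    have "z \<in> sq (i0,j0)" using fl unfolding sq_iff by simp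
    then have x0I: "(i0,j0) \<in> I" unfolding I_def using z by blast
    define s0 where "s0 = min ((of_int i0 + 1) * \<delta> - Re z) ((of_int j0 + 1) * \<delta> - Im z)"
    have s0: "s0 > 0" using fl unfolding s0_def by auto
    have ev: "eventually (\<lambda>s. G (z + of_real s * (1 + \<i>)) - h (z + of_real s * (1 + \<i>)) = 0) (at_right 0)"
    proof (rule eventually_mono[OF eventually_at_right_real[OF s0]])
      fix s assume s: "s \<in> {0<..<s0}"
      have "z + of_real s * (1 + \<i>) \<in> box (p (i0,j0)) (p (fst (i0,j0) + 1, snd (i0,j0) + 1))"
        using s fl unfolding s0_def by (auto simp: in_box_complex_iff Rep algebra_simps)
      from key[OF this x0I] show "G (z + of_real s * (1 + \<i>)) - h (z + of_real s * (1 + \<i>)) = 0" by simp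
    qed
    have "((\<lambda>s. z + of_real s * (1 + \<i>)) \<longlongrightarrow> z) (at_right 0)"
      by (auto intro!: tendsto_eq_intros)
    from isCont_tendsto_compose[OF cont this]
    have l1: "((\<lambda>s. G (z + of_real s * (1 + \<i>)) - h (z + of_real s * (1 + \<i>))) \<longlongrightarrow> G z - h z) (at_right 0)" .
    have l2: "((\<lambda>s. G (z + of_real s * (1 + \<i>)) - h (z + of_real s * (1 + \<i>))) \<longlongrightarrow> 0) (at_right 0)"
      using tendsto_eventually[OF ev] .
    have "G z - h z = 0" using tendsto_unique[OF trivial_limit_at_right_real l1 l2] .
    then show ?thesis unfolding G_def by simp
  qed
  show ?thesis using that[OF finE] edge_ok ident by blast
qed

lemma pair_vec_simps [simp]:
  "pair_vec z w $ Inl u = z" "snd_vec (pair_vec z w) = w"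
  by (simp_all add: pair_vec_def snd_vec_def vec_eq_iff)

lemma approx_holoW:
  fixes K1 :: "complex set" and K2 :: "(complex^'m::finite) set" and H :: "complex \<Rightarrow> complex^'m \<Rightarrow> complex"
  assumes K1: "compact K1" and K2: "compact K2" and HW: "holoW K2 H U" and K1U: "K1 \<subseteq> U" and \<epsilon>: "\<epsilon> > 0"
  shows "\<exists>Om f. holo_vec f Om \<and> (\<forall>z\<in>K1. \<forall>w\<in>K2. pair_vec z w \<in> Om \<and> cmod (H z w - f (pair_vec z w)) \<le> \<epsilon>)"
proof (cases "K1 = {}")
  case True
  then show ?thesis using holo_vec_const[OF open_UNIV] by blast
next
  case K1ne: False
  have U: "open U" using HW unfolding holoW_def by blast
  obtain E :: "((int \<times> int) \<times> bool) set" and a b c where finE: "finite E"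
    and segU: "\<And>e. e \<in> E \<Longrightarrow> closed_segment (a e) (b e) \<subseteq> U"
    and segK: "\<And>e. e \<in> E \<Longrightarrow> closed_segment (a e) (b e) \<inter> K1 = {}"
    and ident: "\<And>h z. h holomorphic_on U \<Longrightarrow> z \<in> K1 \<Longrightarrow>
        h z = (\<Sum>e\<in>E. c e * contour_integral (linepath (a e) (b e)) (\<lambda>\<zeta>. h \<zeta> / (\<zeta> - z)))"
    by (rule grid_cauchy[OF K1 U K1U]) blast
  have Hc: "continuous_on (U \<times> K2) (\<lambda>(z,w). H z w)" using holoW_joint[OF HW K2] .
  define \<epsilon>1 where "\<epsilon>1 = \<epsilon> / (2 * ((\<Sum>e\<in>E. cmod (c e)) + 1))"
  have sc: "(\<Sum>e\<in>E. cmod (c e)) \<ge> 0" by (simp add: sum_nonneg)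
  have \<epsilon>1: "\<epsilon>1 > 0" unfolding \<epsilon>1_def using \<epsilon> sc by (simp add: add_nonneg_pos)
  have "\<exists>n>0. \<forall>p\<in>K1 \<times> K2. cmod (contour_integral (linepath (a e) (b e)) (\<lambda>\<zeta>. H \<zeta> (snd p) / (\<zeta> - fst p))
            - (\<Sum>i<n. H (qp (a e) (b e) n i) (snd p) / (qp (a e) (b e) n i - fst p) * ((b e - a e) / of_nat n))) \<le> \<epsilon>1"
    if eE: "e \<in> E" for e
  proof (rule riemann_linepath[where \<phi> = "\<lambda>\<zeta> p. H \<zeta> (snd p) / (\<zeta> - fst p)", OF compact_Times[OF K1 K2] _ \<epsilon>1])
    have 1: "continuous_on (closed_segment (a e) (b e) \<times> (K1 \<times> K2)) (\<lambda>x. H (fst x) (snd (snd x)))"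
      by (rule continuous_on_compose2[OF Hc, of _ "\<lambda>x. (fst x, snd (snd x))", simplified])
         (use segU[OF eE] in \<open>auto intro!: continuous_intros\<close>)
    have 2: "continuous_on (closed_segment (a e) (b e) \<times> (K1 \<times> K2)) (\<lambda>x. H (fst x) (snd (snd x)) / (fst x - fst (snd x)))"
      by (intro continuous_intros 1) (use segK[OF eE] in auto)
    then show "continuous_on (closed_segment (a e) (b e) \<times> (K1 \<times> K2)) (\<lambda>(\<zeta>, p). H \<zeta> (snd p) / (\<zeta> - fst p))"
      by (simp add: case_prod_beta)
  qed
  then have "\<forall>e\<in>E. \<exists>n. n > 0 \<and> (\<forall>p\<in>K1 \<times> K2. cmod (contour_integral (linepath (a e) (b e)) (\<lambda>\<zeta>. H \<zeta> (snd p) / (\<zeta> - fst p))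
            - (\<Sum>i<n. H (qp (a e) (b e) n i) (snd p) / (qp (a e) (b e) n i - fst p) * ((b e - a e) / of_nat n))) \<le> \<epsilon>1)"
    by blast
  from bchoice[OF this] obtain n where nn: "\<forall>e\<in>E. n e > 0 \<and> (\<forall>p\<in>K1 \<times> K2. cmod (contour_integral (linepath (a e) (b e)) (\<lambda>\<zeta>. H \<zeta> (snd p) / (\<zeta> - fst p))
            - (\<Sum>i<n e. H (qp (a e) (b e) (n e) i) (snd p) / (qp (a e) (b e) (n e) i - fst p) * ((b e - a e) / of_nat (n e)))) \<le> \<epsilon>1)"
    by blast
  have n: "\<And>e. e \<in> E \<Longrightarrow> n e > 0" using nn by blast
  have nR: "cmod (contour_integral (linepath (a e) (b e)) (\<lambda>\<zeta>. H \<zeta> w / (\<zeta> - z))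
            - (\<Sum>i<n e. H (qp (a e) (b e) (n e) i) w / (qp (a e) (b e) (n e) i - z) * ((b e - a e) / of_nat (n e)))) \<le> \<epsilon>1"
    if "e \<in> E" "z \<in> K1" "w \<in> K2" for e z w
  proof -
    have "(z,w) \<in> K1 \<times> K2" using that by simp
    from nn[rule_format, OF that(1)] this show ?thesis by auto
  qed
  define Idx where "Idx = Sigma E (\<lambda>e. {..<n e})"
  have finIdx: "finite Idx" unfolding Idx_def using finE by auto
  define \<zeta> where "\<zeta> k = qp (a (fst k)) (b (fst k)) (n (fst k)) (snd k)" for k
  define coef :: "((int \<times> int) \<times> bool) \<times> nat \<Rightarrow> complex" where "coef k = c (fst k) * ((b (fst k) - a (fst k)) / of_nat (n (fst k)))" for k
  have \<zeta>seg: "\<zeta> k \<in> closed_segment (a (fst k)) (b (fst k))" if "k \<in> Idx" for k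
    using that n unfolding Idx_def \<zeta>_def by (auto intro!: qp_in)
  have fE: "fst k \<in> E" if "k \<in> Idx" for k using that unfolding Idx_def by auto
  have \<zeta>U: "\<zeta> k \<in> U" if "k \<in> Idx" for k using subsetD[OF segU[OF fE[OF that]] \<zeta>seg[OF that]] .
  have \<zeta>K: "\<zeta> k \<notin> K1" if "k \<in> Idx" for k using \<zeta>seg[OF that] segK[OF fE[OF that]] by blast
  define \<eta> where "\<eta> k = infdist (\<zeta> k) K1" for k
  have \<eta>: "\<eta> k > 0" if "k \<in> Idx" for k
    unfolding \<eta>_def using infdist_pos_not_in_closed[OF compact_imp_closed[OF K1] K1ne \<zeta>K[OF that]] .
  have \<eta>le: "\<eta> k \<le> cmod (\<zeta> k - z)" if "z \<in> K1" for k z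
    unfolding \<eta>_def using infdist_le[OF that, of "\<zeta> k"] by (simp add: dist_norm)
  define \<epsilon>2 where "\<epsilon>2 = \<epsilon> / (2 * (real (card Idx) + 1))"
  have \<epsilon>2: "\<epsilon>2 > 0" unfolding \<epsilon>2_def using \<epsilon> by (simp add: add_nonneg_pos)
  have "\<exists>gV. K2 \<subseteq> fst gV \<and> holo_vec (snd gV) (fst gV) \<and>
      (\<forall>w\<in>K2. cmod (H (\<zeta> k) w - snd gV w) \<le> \<epsilon>2 * \<eta> k / (cmod (coef k) + 1))" if kI: "k \<in> Idx" for k
  proof -
    have "H (\<zeta> k) \<in> Obar K2" using HW \<zeta>U[OF kI] unfolding holoW_def by blast
    moreover have "\<epsilon>2 * \<eta> k / (cmod (coef k) + 1) > 0" using \<epsilon>2 \<eta>[OF kI] by (simp add: add_nonneg_pos)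
    ultimately obtain V g where "K2 \<subseteq> V" "holo_vec g V" "\<forall>x\<in>K2. cmod (H (\<zeta> k) x - g x) \<le> \<epsilon>2 * \<eta> k / (cmod (coef k) + 1)"
      unfolding Obar_def by blast
    then show ?thesis by (intro exI[of _ "(V,g)"]) auto
  qed
  then obtain gV where gV: "\<And>k. k \<in> Idx \<Longrightarrow> K2 \<subseteq> fst (gV k) \<and> holo_vec (snd (gV k)) (fst (gV k)) \<and>
      (\<forall>w\<in>K2. cmod (H (\<zeta> k) w - snd (gV k) w) \<le> \<epsilon>2 * \<eta> k / (cmod (coef k) + 1))"
    by metis
  define g where "g k = snd (gV k)" for k
  define V where "V k = fst (gV k)" for k
  define Om where "Om = (\<Inter>k\<in>Idx. {v::complex^(unit+'m). v $ Inl () \<noteq> \<zeta> k} \<inter> {v. snd_vec v \<in> V k})"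
  define f where "f v = (\<Sum>k\<in>Idx. (coef k * g k (snd_vec v)) * (1 / (\<zeta> k - v $ Inl ())))" for v :: "complex^(unit+'m)"
  have openV: "open (V k)" if "k \<in> Idx" for k using gV[OF that] unfolding V_def holo_vec_def by blast
  have openO: "open Om" unfolding Om_def
  proof (intro open_INT ballI finIdx open_Int)
    fix k assume kI: "k \<in> Idx"
    show "open {v::complex^(unit+'m). v $ Inl () \<noteq> \<zeta> k}" by (intro open_Collect_neq continuous_intros)
    show "open {v::complex^(unit+'m). snd_vec v \<in> V k}"
      using open_vimage[OF openV[OF kI] linear_continuous_on[OF bounded_linear_snd_vec]] by (simp add: vimage_def)
  qed
  have holo: "holo_vec f Om" unfolding f_def
  proof (rule holo_vec_sum[OF finIdx openO])
    fix k assume kI: "k \<in> Idx"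
    have oS: "open {v::complex^(unit+'m). snd_vec v \<in> V k}"
      using open_vimage[OF openV[OF kI] linear_continuous_on[OF bounded_linear_snd_vec]] by (simp add: vimage_def)
    have hs: "holo_vec (\<lambda>v::complex^(unit+'m). g k (snd_vec v)) {v. snd_vec v \<in> V k}"
      by (rule holo_vec_snd) (use gV[OF kI] in \<open>simp add: g_def V_def\<close>)
    have 1: "holo_vec (\<lambda>v. coef k * g k (snd_vec v)) Om"
      by (rule holo_vec_subset[OF holo_vec_mult[OF holo_vec_const[OF oS] hs] openO])
         (use kI in \<open>auto simp: Om_def\<close>)
    have 2: "holo_vec (\<lambda>v::complex^(unit+'m). 1 / (\<zeta> k - v $ Inl ())) Om"
      by (rule holo_vec_subset[OF holo_vec_inv_fst openO]) (use kI in \<open>auto simp: Om_def\<close>)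
    show "holo_vec (\<lambda>v. coef k * g k (snd_vec v) * (1 / (\<zeta> k - v $ Inl ()))) Om"
      using holo_vec_mult[OF 1 2] .
  qed
  show ?thesis
  proof (intro exI[of _ Om] exI[of _ f] conjI holo ballI)
    fix z w assume z: "z \<in> K1" and w: "w \<in> K2"
    show "pair_vec z w \<in> Om" unfolding Om_def
    proof (intro InterI, clarsimp)
      fix k assume kI: "k \<in> Idx"
      show "z \<noteq> \<zeta> k \<and> w \<in> V k" using \<zeta>K[OF kI] z w gV[OF kI] unfolding V_def by auto
    qed
    have hw: "(\<lambda>\<zeta>. H \<zeta> w) holomorphic_on U" using holoW_holomorphic[OF HW w] .
    define RS where "RS e = (\<Sum>i<n e. H (qp (a e) (b e) (n e) i) w / (qp (a e) (b e) (n e) i - z) * ((b e - a e) / of_nat (n e)))" for e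
    have "H z w - (\<Sum>e\<in>E. c e * RS e) = (\<Sum>e\<in>E. c e * (contour_integral (linepath (a e) (b e)) (\<lambda>\<zeta>. H \<zeta> w / (\<zeta> - z)) - RS e))"
      using ident[OF hw z] by (simp add: sum_subtractf algebra_simps)
    also have "cmod \<dots> \<le> (\<Sum>e\<in>E. cmod (c e) * \<epsilon>1)"
      by (rule order_trans[OF norm_sum sum_mono])
         (use nR z w in \<open>auto simp: norm_mult RS_def intro!: mult_left_mono\<close>)
    also have "\<dots> \<le> \<epsilon> / 2"
    proof -
      have "(\<Sum>e\<in>E. cmod (c e) * \<epsilon>1) = (\<Sum>e\<in>E. cmod (c e)) * \<epsilon>1" by (simp add: sum_distrib_right)
      also have "\<dots> \<le> ((\<Sum>e\<in>E. cmod (c e)) + 1) * \<epsilon>1" using \<epsilon>1 by (intro mult_right_mono) auto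
      also have "\<dots> = \<epsilon> / 2" unfolding \<epsilon>1_def using sc by (simp add: field_simps)
      finally show ?thesis .
    qed
    finally have A: "cmod (H z w - (\<Sum>e\<in>E. c e * RS e)) \<le> \<epsilon> / 2" .
    have "(\<Sum>e\<in>E. c e * RS e) = (\<Sum>e\<in>E. \<Sum>i<n e. coef (e,i) * H (\<zeta> (e,i)) w / (\<zeta> (e,i) - z))"
      unfolding RS_def coef_def \<zeta>_def by (simp add: sum_distrib_left algebra_simps)
    also have "\<dots> = (\<Sum>k\<in>Idx. coef k * H (\<zeta> k) w / (\<zeta> k - z))"
      unfolding Idx_def by (subst sum.Sigma[OF finE]) (auto simp: case_prod_beta)
    finally have RSeq: "(\<Sum>e\<in>E. c e * RS e) = (\<Sum>k\<in>Idx. coef k * H (\<zeta> k) w / (\<zeta> k - z))" .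
    have "(\<Sum>k\<in>Idx. coef k * H (\<zeta> k) w / (\<zeta> k - z)) - f (pair_vec z w)
        = (\<Sum>k\<in>Idx. coef k * (H (\<zeta> k) w - g k w) / (\<zeta> k - z))"
      unfolding f_def by (simp add: sum_subtractf[symmetric] field_simps diff_divide_distrib)
    also have "cmod \<dots> \<le> (\<Sum>k\<in>Idx. \<epsilon>2)"
    proof (rule order_trans[OF norm_sum sum_mono])
      fix k assume kI: "k \<in> Idx"
      have pos: "\<eta> k > 0" using \<eta>[OF kI] .
      have d: "cmod (\<zeta> k - z) \<ge> \<eta> k" using \<eta>le[OF z] .
      have gb: "cmod (H (\<zeta> k) w - g k w) \<le> \<epsilon>2 * \<eta> k / (cmod (coef k) + 1)" using gV[OF kI] w unfolding g_def by blast
      have "cmod (coef k * (H (\<zeta> k) w - g k w) / (\<zeta> k - z)) = cmod (coef k) * cmod (H (\<zeta> k) w - g k w) / cmod (\<zeta> k - z)"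
        by (simp add: norm_mult norm_divide)
      also have "\<dots> \<le> cmod (coef k) * (\<epsilon>2 * \<eta> k / (cmod (coef k) + 1)) / \<eta> k"
        using pos d gb \<epsilon>2 by (intro frac_le mult_left_mono) (auto intro!: divide_nonneg_nonneg mult_nonneg_nonneg)
      also have "\<dots> = \<epsilon>2 * (cmod (coef k) / (cmod (coef k) + 1))"
      proof -
        have cp: "cmod (coef k) + 1 > 0" by (smt (verit) norm_ge_zero)
        show ?thesis using pos cp by (simp add: divide_simps)
      qed
      also have "\<dots> \<le> \<epsilon>2 * 1"
      proof -
        have cp: "cmod (coef k) + 1 > 0" by (smt (verit) norm_ge_zero)
        then have "cmod (coef k) / (cmod (coef k) + 1) \<le> 1" by (simp add: divide_simps)
        then show ?thesis using \<epsilon>2 by (intro mult_left_mono) auto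
      qed
      finally show "cmod (coef k * (H (\<zeta> k) w - g k w) / (\<zeta> k - z)) \<le> \<epsilon>2" by simp
    qed
    also have "\<dots> \<le> \<epsilon> / 2"
    proof -
      have "(\<Sum>k\<in>Idx. \<epsilon>2) = real (card Idx) * \<epsilon>2" by simp
      also have "\<dots> \<le> (real (card Idx) + 1) * \<epsilon>2" using \<epsilon>2 by (intro mult_right_mono) auto
      also have "\<dots> = \<epsilon> / 2" unfolding \<epsilon>2_def by (simp add: field_simps)
      finally show ?thesis .
    qed
    finally have B: "cmod ((\<Sum>k\<in>Idx. coef k * H (\<zeta> k) w / (\<zeta> k - z)) - f (pair_vec z w)) \<le> \<epsilon> / 2" .
    have "cmod (H z w - f (pair_vec z w)) \<le> cmod (H z w - (\<Sum>e\<in>E. c e * RS e)) + cmod ((\<Sum>e\<in>E. c e * RS e) - f (pair_vec z w))"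
      by (rule norm_diff_triangle_le) auto
    then show "cmod (H z w - f (pair_vec z w)) \<le> \<epsilon>" using A B RSeq by simp
  qed
qed

theorem mainTheorem11:
  fixes K1 :: "complex set" and K2 :: "(complex^'m) set"
    and F :: "complex \<Rightarrow> complex^'m \<Rightarrow> complex"
  assumes "compact K1" and "compact K2"
    and "F \<in> ObarW K1 K2"
  shows "(\<lambda>v. F (v $ Inl ()) (\<chi> j. v $ Inr j)) \<in> Obar ((\<lambda>(z, w). pair_vec z w) ` (K1 \<times> K2))"
proof -
  let ?S = "(\<lambda>(z, w). pair_vec z w) ` (K1 \<times> K2)"
  have G: "(\<lambda>v. F (v $ Inl ()) (\<chi> j. v $ Inr j)) = (\<lambda>v. F (v $ Inl ()) (snd_vec v))"
    by (simp add: snd_vec_def)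
  have cont: "continuous_on ?S (\<lambda>v. F (v $ Inl ()) (snd_vec v))"
  proof -
    have "continuous_on ?S (\<lambda>x. (\<lambda>(z,w). F z w) (x $ Inl (), snd_vec x))"
    proof (rule continuous_on_compose2[OF ObarW_joint[OF assms(3)]])
      show "continuous_on ?S (\<lambda>x. (x $ Inl (), snd_vec x))"
        by (intro continuous_on_Pair continuous_on_component continuous_on_id linear_continuous_on[OF bounded_linear_snd_vec])
      show "(\<lambda>x. (x $ Inl (), snd_vec x)) ` ?S \<subseteq> K1 \<times> K2" by auto
    qed
    then show ?thesis by simp
  qed
  have approx: "\<exists>U f. ?S \<subseteq> U \<and> holo_vec f U \<and> (\<forall>x\<in>?S. cmod (F (x $ Inl ()) (snd_vec x) - f x) \<le> \<epsilon>)"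
    if \<epsilon>: "\<epsilon> > 0" for \<epsilon>
  proof -
    have "\<forall>\<epsilon>>0. \<exists>U H. K1 \<subseteq> U \<and> holoW K2 H U \<and> (\<forall>x\<in>K1. \<forall>w\<in>K2. cmod (F x w - H x w) \<le> \<epsilon>)"
      using assms(3) unfolding ObarW_def by blast
    from this[rule_format, OF half_gt_zero[OF \<epsilon>]]
    obtain U H where U: "K1 \<subseteq> U" "holoW K2 H U" and FH: "\<forall>x\<in>K1. \<forall>w\<in>K2. cmod (F x w - H x w) \<le> \<epsilon>/2"
      by blast
    obtain Om f where Om: "holo_vec f Om" and fa: "\<forall>z\<in>K1. \<forall>w\<in>K2. pair_vec z w \<in> Om \<and> cmod (H z w - f (pair_vec z w)) \<le> \<epsilon>/2"
      using approx_holoW[OF assms(1,2) U(2) U(1), of "\<epsilon>/2"] \<epsilon> by auto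
    show ?thesis
    proof (intro exI[of _ Om] exI[of _ f] conjI Om ballI subsetI)
      fix x assume "x \<in> ?S"
      then obtain z w where x: "x = pair_vec z w" "z \<in> K1" "w \<in> K2" by auto
      then show "x \<in> Om" using fa by auto
      have "cmod (F z w - f (pair_vec z w)) \<le> cmod (F z w - H z w) + cmod (H z w - f (pair_vec z w))"
        by (rule norm_diff_triangle_le) auto
      also have "\<dots> \<le> \<epsilon>/2 + \<epsilon>/2" using FH fa x by (intro add_mono) auto
      finally show "cmod (F (x $ Inl ()) (snd_vec x) - f x) \<le> \<epsilon>" using x by simp
    qed
  qed
  show ?thesis unfolding G Obar_def using cont approx by blast
qed

end
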